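(* Let $R$ be a commutative ring with identity whose set of zero-divisors $Z_R$ contains a nonzero element, $n>1$, $S=M_n(R)$, and let $d$ denote distance in the orthogonality graph $O(S)$. (1) For every vertex $A$ of $O(S)$ there exists $b\in Z_R\setminus\{0\}$ with $d(A,bE)\le 2$ (and $bE$ is a vertex of $O(S)$). (2) If $A_1,A_2$ are vertices of $O(S)$ with $\operatorname{Ann}(\det A_1)\cap\operatorname{Ann}(\det A_2)\ne0$, then $d(A_1,A_2)\le 4$.
   Context: The orthogonality graph $O(S)$ of a ring $S$ is the undirected graph whose vertices are the nonzero two-sided zero-divisors of $S$, distinct vertices $x,y$ being adjacent iff $xy=yx=0$; $d$ is the graph distance. $Z_R$ is the set of zero-divisors of $R$ (including $0$), $\operatorname{Ann}(a)=\{x\in R:ax=0\}$, $E$ is the identity matrix. *)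

theory Defs
  imports "HOL-Analysis.Analysis" "HOL-Library.Extended_Nat"
begin

definition zero_divisors :: "'a::comm_ring_1 set" where
  "zero_divisors = {x. \<exists>y. y \<noteq> 0 \<and> x * y = 0}"

definition Ann :: "'a::comm_ring_1 \<Rightarrow> 'a set" where
  "Ann a = {x. a * x = 0}"

definition orth_vertex :: "'a::comm_ring_1^'n^'n \<Rightarrow> bool" where
  "orth_vertex A \<longleftrightarrow> A \<noteq> 0 \<and> (\<exists>B::'a^'n^'n. B \<noteq> 0 \<and> A ** B = 0) \<and> (\<exists>C::'a^'n^'n. C \<noteq> 0 \<and> C ** A = 0)"

definition orth_adj :: "'a::comm_ring_1^'n^'n \<Rightarrow> 'a^'n^'n \<Rightarrow> bool" where
  "orth_adj A B \<longleftrightarrow> orth_vertex A \<and> orth_vertex B \<and> A \<noteq> B \<and> A ** B = 0 \<and> B ** A = 0"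

fun is_walk :: "('v \<Rightarrow> 'v \<Rightarrow> bool) \<Rightarrow> 'v list \<Rightarrow> bool" where
  "is_walk E [] = False"
| "is_walk E [x] = True"
| "is_walk E (x # y # xs) = (E x y \<and> is_walk E (y # xs))"

definition graph_dist :: "('v \<Rightarrow> 'v \<Rightarrow> bool) \<Rightarrow> 'v \<Rightarrow> 'v \<Rightarrow> enat" where
  "graph_dist E x y =
     (INF xs \<in> {xs. is_walk E xs \<and> hd xs = x \<and> last xs = y}. enat (length xs - 1))"

end

theory Submission
  imports Defs
begin


definition rowrep :: "'a^'n^'n \<Rightarrow> 'n \<Rightarrow> 'a^'n \<Rightarrow> 'a^'n^'n" where
  "rowrep M i w = (\<chi> k. if k = i then w else M$k)"
definition colrep :: "'a^'n^'n \<Rightarrow> 'n \<Rightarrow> 'a^'n \<Rightarrow> 'a^'n^'n" where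
  "colrep M j v = (\<chi> k l. if l = j then v$k else M$k$l)"
definition cof :: "'a::comm_ring_1^'n^'n \<Rightarrow> 'n \<Rightarrow> 'n \<Rightarrow> 'a" where
  "cof M j i = det (rowrep M i (axis j 1))"

lemma det_rowrep: fixes M :: "'a::comm_ring_1^'n^'n" shows "det (rowrep M i w) = (\<Sum>j\<in>UNIV. w$j * cof M j i)"
proof -
  have "rowrep M i w = (\<chi> k. if k = i then (\<Sum>j\<in>UNIV. (w$j) *s axis j 1) else M$k)"
    unfolding rowrep_def basis_expansion ..
  also have "det \<dots> = (\<Sum>j\<in>UNIV. det ((\<chi> k. if k = i then (w$j) *s axis j 1 else M$k)::'a^'n^'n))"
    by (rule det_linear_row_sum) simp
  also have "\<dots> = (\<Sum>j\<in>UNIV. w$j * cof M j i)"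
    unfolding cof_def rowrep_def
    by (rule sum.cong[OF refl]) (rule det_row_mul[of i "w$_" "\<lambda>_. axis _ 1" "\<lambda>k. M$k"])
  finally show ?thesis .
qed

lemma detZ:
  fixes N N' :: "'a::comm_ring_1^'n^'n"
  assumes "\<forall>l. N$i$l = (if l = j then 1 else 0)" "\<forall>l. N'$i$l = (if l = j then 1 else 0)"
    "\<forall>k l. k \<noteq> i \<longrightarrow> l \<noteq> j \<longrightarrow> N$k$l = N'$k$l"
  shows "det N = det N'"
  unfolding det_def
proof (rule sum.cong[OF refl])
  fix p assume "p \<in> {p. p permutes (UNIV::'n set)}"
  then have p: "p permutes (UNIV::'n set)" by simp
  show "of_int (sign p) * (\<Prod>k\<in>UNIV. N $ k $ p k) = of_int (sign p) * (\<Prod>k\<in>UNIV. N' $ k $ p k)"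
  proof (cases "p i = j")
    case True
    have "(\<Prod>k\<in>UNIV. N $ k $ p k) = (\<Prod>k\<in>UNIV. N' $ k $ p k)"
    proof (rule prod.cong[OF refl])
      fix k show "N $ k $ p k = N' $ k $ p k"
      proof (cases "k = i")
        case True then show ?thesis using assms by simp
      next
        case False
        then have "p k \<noteq> j" using True p by (metis permutes_inj injD)
        then show ?thesis using assms False by simp
      qed
    qed
    then show ?thesis by simp
  next
    case False
    have "(\<Prod>k\<in>UNIV. N $ k $ p k) = 0" "(\<Prod>k\<in>UNIV. N' $ k $ p k) = 0"
      using False assms by (auto intro!: prod_zero bexI[of _ i])
    then show ?thesis by simp
  qed
qed

lemma detZc:
  fixes N N' :: "'a::comm_ring_1^'n^'n"
  assumes "\<forall>k. N$k$j = (if k = i then 1 else 0)" "\<forall>k. N'$k$j = (if k = i then 1 else 0)"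
    "\<forall>k l. k \<noteq> i \<longrightarrow> l \<noteq> j \<longrightarrow> N$k$l = N'$k$l"
  shows "det N = det N'"
proof -
  have "det (transpose N) = det (transpose N')"
    by (rule detZ[of _ j i]) (use assms in \<open>auto simp: transpose_def\<close>)
  then show ?thesis by simp
qed

lemma cof_col: fixes M :: "'a::comm_ring_1^'n^'n" shows "cof M j i = det (colrep M j (axis i 1))"
proof -
  define N3 where "N3 = (\<chi> k l. if k = i then (if l = j then 1 else 0) else if l = j then 0 else M$k$l)"
  have "cof M j i = det N3" unfolding cof_def
    by (rule detZ[of _ i j]) (auto simp: N3_def rowrep_def axis_def)
  also have "\<dots> = det (colrep M j (axis i 1))"
    by (rule detZc[of _ j i]) (auto simp: N3_def colrep_def axis_def)
  finally show ?thesis .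
qed

lemma det_colrep: fixes M :: "'a::comm_ring_1^'n^'n" shows "det (colrep M j v) = (\<Sum>i\<in>UNIV. cof M j i * v$i)"
proof -
  have ct: "colrep M j v = transpose (rowrep (transpose M) j v)" for v
    by (simp add: colrep_def rowrep_def transpose_def vec_eq_iff)
  then have "det (colrep M j v) = (\<Sum>i\<in>UNIV. v$i * cof (transpose M) i j)" using ct
    by (simp add: det_rowrep)
  also have "\<dots> = (\<Sum>i\<in>UNIV. cof M j i * v$i)"
  proof (rule sum.cong[OF refl])
    fix i
    have "cof (transpose M) i j = det (colrep M j (axis i 1))"
      unfolding cof_def
      by (metis ct det_transpose)
    then show "v$i * cof (transpose M) i j = cof M j i * v$i" by (simp add: cof_col mult.commute)
  qed
  finally show ?thesis .
qed



lemma colrep_transpose: "colrep M j v = transpose (rowrep (transpose M) j v)"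
  by (simp add: colrep_def rowrep_def transpose_def vec_eq_iff)

lemma cramer_comm:
  fixes A :: "'a::comm_ring_1^'n^'n"
  shows "det (colrep A j (A *v x)) = x$j * det A"
proof -
  have v: "A *v x = (\<Sum>k\<in>UNIV. x$k *s (transpose A)$k)"
    by (simp add: vec_eq_iff matrix_vector_mult_def transpose_def sum_component mult.commute)
  have "det (colrep A j (A *v x)) = det (rowrep (transpose A) j (A *v x))"
    by (simp add: colrep_transpose)
  also have "rowrep (transpose A) j (A *v x) =
     (\<chi> r. if r = j then (\<Sum>k\<in>UNIV. x$k *s (transpose A)$k) else (transpose A)$r)"
    unfolding rowrep_def v ..
  also have "det \<dots> = (\<Sum>k\<in>UNIV. det ((\<chi> r. if r = j then x$k *s (transpose A)$k else (transpose A)$r)::'a^'n^'n))"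
    by (rule det_linear_row_sum) simp
  also have "\<dots> = (\<Sum>k\<in>UNIV. if k = j then x$j * det A else 0)"
  proof (rule sum.cong[OF refl])
    fix k
    have "det ((\<chi> r. if r = j then x$k *s (transpose A)$k else (transpose A)$r)::'a^'n^'n)
        = x$k * det ((\<chi> r. if r = j then (transpose A)$k else (transpose A)$r)::'a^'n^'n)"
      by (rule det_row_mul[of j "x$k" "\<lambda>_. (transpose A)$k" "\<lambda>r. (transpose A)$r"])
    moreover have "k \<noteq> j \<Longrightarrow> det ((\<chi> r. if r = j then (transpose A)$k else (transpose A)$r)::'a^'n^'n) = 0"
      by (rule det_identical_rows[of j k]) (auto simp: row_def vec_eq_iff)
    moreover have "(\<chi> r. if r = j then (transpose A)$j else (transpose A)$r) = transpose A"
      by (simp add: vec_eq_iff)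
    ultimately show "det ((\<chi> r. if r = j then x$k *s (transpose A)$k else (transpose A)$r)::'a^'n^'n)
        = (if k = j then x$j * det A else 0)" by auto
  qed
  also have "\<dots> = x$j * det A" by simp
  finally show ?thesis .
qed

lemma det_annihilates:
  fixes A B :: "'a::comm_ring_1^'n^'n"
  assumes "A ** B = 0"
  shows "det A * B$i$j = 0"
proof -
  define x where "x = (\<chi> k. B$k$j)"
  have "A *v x = 0"
  proof -
    have "(A *v x)$p = (A ** B)$p$j" for p
      by (simp add: x_def matrix_vector_mult_def matrix_matrix_mult_def)
    then show ?thesis using assms by (simp add: vec_eq_iff)
  qed
  then have "x$i * det A = det (colrep A i 0)" using cramer_comm[of A i x] by simp
  also have "\<dots> = 0" by (simp add: det_colrep)
  finally show ?thesis by (simp add: x_def mult.commute)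
qed

definition fam :: "'a::comm_ring_1^'n^'n \<Rightarrow> 'n set \<Rightarrow> 'n set \<Rightarrow> ('n\<Rightarrow>'n) \<Rightarrow> ('n\<Rightarrow>'n) \<Rightarrow> ('n\<Rightarrow>'n) \<Rightarrow> 'a^'n^'n" where
  "fam A I J \<sigma> \<rho> \<kappa> = (\<chi> i j. if i \<in> I then (if j \<in> J then A$\<rho> i$\<kappa> j else 0) else (if j = \<sigma> i then 1 else 0))"

definition Kt :: "'a::comm_ring_1 \<Rightarrow> 'a^'n^'n \<Rightarrow> nat \<Rightarrow> bool" where
  "Kt c A t \<longleftrightarrow> (\<forall>I J \<sigma> \<rho> \<kappa>. card I = t \<longrightarrow> bij_betw \<sigma> (-I) (-J) \<longrightarrow> c * det (fam A I J \<sigma> \<rho> \<kappa>) = 0)"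

lemma sum_delta_l: "(\<Sum>k\<in>UNIV. (if k = (a::'n::finite) then 1 else 0) * (f k :: 'a::comm_ring_1)) = f a"
proof -
  have "(\<Sum>k\<in>UNIV. (if k = a then 1 else 0) * f k) = (\<Sum>k\<in>UNIV. if k = a then f k else 0)"
    by (rule sum.cong) auto
  then show ?thesis by simp
qed

lemma sum_delta_r: "(\<Sum>k\<in>UNIV. (f k :: 'a::comm_ring_1) * (if k = (a::'n::finite) then 1 else 0)) = f a"
  using sum_delta_l[of a f] by (simp add: mult.commute)

lemma K0: "c \<noteq> 0 \<Longrightarrow> \<not> Kt c (A::'a::comm_ring_1^'n^'n) 0"
proof
  assume "c \<noteq> 0" "Kt c A 0"
  then have "c * det (fam A {} {} id id id) = 0" unfolding Kt_def by (auto simp: bij_betw_def)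
  moreover have "fam A {} {} id id id = mat 1" by (auto simp: fam_def mat_def vec_eq_iff)
  ultimately show False using \<open>c \<noteq> 0\<close> by simp
qed

lemma Kn:
  fixes A :: "'a::comm_ring_1^'n^'n"
  assumes "c * det A = 0" shows "Kt c A CARD('n)"
  unfolding Kt_def
proof (intro allI impI)
  fix I J :: "'n set" and \<sigma> \<rho> \<kappa>
  assume "card I = CARD('n)" "bij_betw \<sigma> (-I) (-J)"
  then have I: "I = UNIV" by (simp add: card_eq_UNIV_imp_eq_UNIV)
  with \<open>bij_betw \<sigma> (-I) (-J)\<close> have J: "J = UNIV" using bij_betw_empty1 by fastforce
  define P :: "'a^'n^'n" where "P = (\<chi> i q. if q = \<rho> i then 1 else 0)"
  define Q :: "'a^'n^'n" where "Q = (\<chi> m j. if m = \<kappa> j then 1 else 0)"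
  have "fam A I J \<sigma> \<rho> \<kappa> = P ** A ** Q"
    by (simp add: I J fam_def P_def Q_def vec_eq_iff matrix_matrix_mult_def sum_delta_l sum_delta_r)
  moreover have "c * det (P ** A ** Q) = (c * det A) * (det P * det Q)"
    by (simp add: det_mul mult_ac)
  ultimately show "c * det (fam A I J \<sigma> \<rho> \<kappa>) = 0" using assms by simp
qed

lemma exists_step: "\<not> P (0::nat) \<Longrightarrow> P n \<Longrightarrow> \<exists>r<n. \<not> P r \<and> P (Suc r)"
  by (induction n) (auto intro: less_SucI)



lemma card_Compl': "card (- (A::'n::finite set)) = CARD('n) - card A"
  by (metis Compl_eq_Diff_UNIV card_Diff_subset top_greatest finite)

lemma key:
  fixes A :: "'a::comm_ring_1^'n^'n"
  assumes c: "c \<noteq> 0" "c * det A = 0"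
  shows "\<exists>X::'a^'n^'n. (\<chi> m q. c * X$m$q) \<noteq> 0 \<and> A ** (\<chi> m q. c * X$m$q) = 0 \<and> (\<chi> m q. c * X$m$q) ** A = 0"
proof -
  obtain r where r: "r < CARD('n)" "\<not> Kt c A r" "Kt c A (Suc r)"
    using exists_step[of "Kt c A", OF K0[OF c(1)] Kn[OF c(2)]] by auto
  then obtain I J \<sigma> \<rho> \<kappa> where w: "card I = r" "bij_betw \<sigma> (-I) (-J)" "c * det (fam A I J \<sigma> \<rho> \<kappa>) \<noteq> 0"
    unfolding Kt_def by blast
  have "I \<noteq> UNIV" using w(1) r(1) by auto
  then obtain i0 where i0: "i0 \<notin> I" by auto
  define k0 where "k0 = \<sigma> i0"
  have k0: "k0 \<notin> J" using w(2) i0 unfolding k0_def bij_betw_def by auto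
  have "card (\<rho> ` I) \<le> r" using card_image_le[of I \<rho>] w(1) by simp
  then have "\<rho> ` I \<noteq> UNIV" using r(1) by auto
  then obtain a where a: "a \<notin> \<rho> ` I" by auto
  have "card (-I) = card (-J)" using w(2) by (rule bij_betw_same_card)
  then have cJ: "card J = r" using w(1) r(1) card_Compl'[of I] card_Compl'[of J]
    card_mono[of UNIV J] by simp
  then have "card (\<kappa> ` J) \<le> r" using card_image_le[of J \<kappa>] by simp
  then have "\<kappa> ` J \<noteq> UNIV" using r(1) by auto
  then obtain b where b: "b \<notin> \<kappa> ` J" by auto
  define I' where "I' = insert i0 I"
  define J' where "J' = insert k0 J"
  define \<rho>' where "\<rho>' = \<rho>(i0 := a)"
  define \<kappa>' where "\<kappa>' = \<kappa>(k0 := b)"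
  have bij': "bij_betw \<sigma> (-I') (-J')"
  proof -
    have "bij_betw \<sigma> (-I - {i0}) (-J - {k0})"
      by (rule bij_betw_DiffI[OF w(2)]) (use i0 k0 in \<open>auto simp: k0_def bij_betw_def\<close>)
    then show ?thesis by (simp add: I'_def J'_def Compl_insert)
  qed
  have cI': "card I' = Suc r" using i0 w(1) by (simp add: I'_def)
  have K': "\<And>\<rho>'' \<kappa>''. c * det (fam A I' J' \<sigma> \<rho>'' \<kappa>'') = 0"
    using r(3) cI' bij' unfolding Kt_def by blast
  have sig: "\<sigma> i \<notin> J'" if "i \<notin> I'" for i
    using bij' that unfolding bij_betw_def by auto
  define M where "M = fam A I' J' \<sigma> \<rho>' \<kappa>'"
  define U :: "'a^'n^'n" where "U = (\<chi> i q. if i \<in> I' \<and> q = \<rho>' i then 1 else 0)"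
  define V :: "'a^'n^'n" where "V = (\<chi> m j. if j \<in> J' \<and> m = \<kappa>' j then 1 else 0)"
  define Ad :: "'a^'n^'n" where "Ad = (\<chi> j i. cof M j i)"
  define X where "X = V ** Ad ** U"
  define Y where "Y = (\<chi> m q. c * X$m$q)"
  have AV: "(A ** V)$p$j = (if j \<in> J' then A$p$\<kappa>' j else 0)" for p j
    by (cases "j \<in> J'") (simp_all add: matrix_matrix_mult_def V_def sum_delta_r)
  have UA: "(U ** A)$i$q = (if i \<in> I' then A$\<rho>' i$q else 0)" for i q
    by (cases "i \<in> I'") (simp_all add: matrix_matrix_mult_def U_def sum_delta_l)
  have D: "c * ((A ** V) ** Ad)$p$i = 0" if "i \<in> I'" for p i
  proof -
    define w where "w = (\<chi> j. (A ** V)$p$j)"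
    have "((A ** V) ** Ad)$p$i = det (rowrep M i w)"
      by (simp add: det_rowrep matrix_matrix_mult_def w_def Ad_def)
    also have "rowrep M i w = fam A I' J' \<sigma> (\<rho>'(i:=p)) \<kappa>'"
      using that by (auto simp: vec_eq_iff rowrep_def M_def fam_def w_def AV)
    finally show ?thesis using K' by simp
  qed
  have D2: "c * (Ad ** (U ** A))$j$q = 0" if "j \<in> J'" for j q
  proof -
    define v where "v = (\<chi> i. (U ** A)$i$q)"
    have "(Ad ** (U ** A))$j$q = det (colrep M j v)"
      by (simp add: det_colrep matrix_matrix_mult_def v_def Ad_def)
    also have "colrep M j v = fam A I' J' \<sigma> \<rho>' (\<kappa>'(j:=q))"
      using that sig by (auto simp: vec_eq_iff colrep_def M_def fam_def v_def UA)
    finally show ?thesis using K' by simp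
  qed
  have AY: "A ** Y = 0"
  proof -
    have "(A ** Y)$p$q = 0" for p q
    proof -
      have "(A ** Y)$p$q = c * (A ** X)$p$q"
        by (simp add: Y_def matrix_matrix_mult_def sum_distrib_left mult_ac)
      also have "A ** X = ((A ** V) ** Ad) ** U" by (simp add: X_def matrix_mul_assoc)
      also have "(((A ** V) ** Ad) ** U)$p$q = (\<Sum>i\<in>UNIV. ((A ** V) ** Ad)$p$i * U$i$q)"
        by (simp add: matrix_matrix_mult_def)
      also have "c * \<dots> = (\<Sum>i\<in>UNIV. (c * ((A ** V) ** Ad)$p$i) * U$i$q)"
        by (simp add: sum_distrib_left mult_ac)
      also have "\<dots> = 0"
        by (rule sum.neutral) (auto simp: D U_def)
      finally show ?thesis .
    qed
    then show ?thesis by (simp add: vec_eq_iff)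
  qed
  have YA: "Y ** A = 0"
  proof -
    have "(Y ** A)$m$q = 0" for m q
    proof -
      have "(Y ** A)$m$q = c * (X ** A)$m$q"
        by (simp add: Y_def matrix_matrix_mult_def sum_distrib_left mult_ac)
      also have "X ** A = V ** (Ad ** (U ** A))" by (simp add: X_def matrix_mul_assoc)
      also have "(V ** (Ad ** (U ** A)))$m$q = (\<Sum>j\<in>UNIV. V$m$j * (Ad ** (U ** A))$j$q)"
        by (simp add: matrix_matrix_mult_def)
      also have "c * \<dots> = (\<Sum>j\<in>UNIV. V$m$j * (c * (Ad ** (U ** A))$j$q))"
        by (simp add: sum_distrib_left mult_ac)
      also have "\<dots> = 0"
        by (rule sum.neutral) (auto simp: D2 V_def)
      finally show ?thesis .
    qed
    then show ?thesis by (simp add: vec_eq_iff)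
  qed
  have hU: "U$i$a = (if i = i0 then 1 else 0)" for i
    using a i0 by (auto simp: U_def I'_def \<rho>'_def)
  have hV: "V$b$j = (if j = k0 then 1 else 0)" for j
    using b k0 by (auto simp: V_def J'_def \<kappa>'_def)
  have "X$b$a = cof M k0 i0"
    by (simp add: X_def matrix_matrix_mult_def hU hV sum_delta_l sum_delta_r Ad_def)
  also have "\<dots> = det (fam A I J \<sigma> \<rho> \<kappa>)" unfolding cof_def
    by (rule detZ[of _ i0 k0])
      (use i0 k0 in \<open>auto simp: rowrep_def axis_def M_def fam_def I'_def J'_def \<rho>'_def \<kappa>'_def k0_def\<close>)
  finally have "Y$b$a \<noteq> 0" using w(3) by (simp add: Y_def)
  then have "Y \<noteq> 0" by auto
  then show ?thesis using AY YA unfolding Y_def by blast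
qed



lemma walk_reduce:
  "is_walk (\<lambda>x y. x = y \<or> E x y) xs \<Longrightarrow>
   \<exists>ys. is_walk E ys \<and> hd ys = hd xs \<and> last ys = last xs \<and> length ys \<le> length xs"
proof (induction xs)
  case Nil then show ?case by simp
next
  case (Cons x xs)
  show ?case
  proof (cases xs)
    case Nil then show ?thesis by (intro exI[of _ "[x]"]) simp
  next
    case (Cons y zs)
    with Cons.prems have xy: "x = y \<or> E x y" and w: "is_walk (\<lambda>x y. x = y \<or> E x y) xs" by auto
    from Cons.IH[OF w] obtain ys where ys: "is_walk E ys" "hd ys = hd xs" "last ys = last xs"
      "length ys \<le> length xs" by blast
    have ne: "ys \<noteq> []" using ys(1) by auto
    show ?thesis
    proof (cases "x = y")
      case True then show ?thesis using ys ne Cons by (intro exI[of _ ys]) auto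
    next
      case False
      then have "E x y" using xy by simp
      have "is_walk E (x # ys)" using ys(1) ys(2) ne \<open>E x y\<close> Cons
        by (cases ys) auto
      then show ?thesis using ys ne Cons by (intro exI[of _ "x # ys"]) auto
    qed
  qed
qed

lemma dist_le:
  assumes "is_walk (\<lambda>x y. x = y \<or> E x y) xs" "hd xs = a" "last xs = b"
  shows "graph_dist E a b \<le> enat (length xs - 1)"
proof -
  obtain ys where ys: "is_walk E ys" "hd ys = a" "last ys = b" "length ys \<le> length xs"
    using walk_reduce[OF assms(1)] assms by auto
  have "graph_dist E a b \<le> enat (length ys - 1)"
    unfolding graph_dist_def by (rule INF_lower) (use ys in auto)
  also have "\<dots> \<le> enat (length xs - 1)" using ys(4) by simp
  finally show ?thesis .
qed

lemma mat_lmul: "(mat d :: 'a::comm_ring_1^'n^'n) ** M = (\<chi> i j. d * M$i$j)"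
proof -
  have "(\<Sum>k\<in>UNIV. (if i = k then d else 0) * M$k$j) = d * M$i$j" for i j
  proof -
    have "(\<Sum>k\<in>UNIV. (if i = k then d else 0) * M$k$j) = (\<Sum>k\<in>UNIV. if k = i then d * M$k$j else 0)"
      by (rule sum.cong) auto
    then show ?thesis by simp
  qed
  then show ?thesis by (simp add: vec_eq_iff matrix_matrix_mult_def mat_def)
qed

lemma mat_rmul: "M ** (mat d :: 'a::comm_ring_1^'n^'n) = (\<chi> i j. M$i$j * d)"
proof -
  have "(\<Sum>k\<in>UNIV. M$i$k * (if k = j then d else 0)) = M$i$j * d" for i j
  proof -
    have "(\<Sum>k\<in>UNIV. M$i$k * (if k = j then d else 0)) = (\<Sum>k\<in>UNIV. if k = j then M$i$k * d else 0)"
      by (rule sum.cong) auto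
    then show ?thesis by simp
  qed
  then show ?thesis by (simp add: vec_eq_iff matrix_matrix_mult_def mat_def)
qed

lemma mat_nz: "d \<noteq> 0 \<Longrightarrow> (mat d :: 'a::comm_ring_1^'n^'n) \<noteq> 0"
  by (auto simp: vec_eq_iff mat_def)

lemma wadj_intro: "X \<noteq> 0 \<Longrightarrow> Y \<noteq> 0 \<Longrightarrow> X ** Y = 0 \<Longrightarrow> Y ** X = 0 \<Longrightarrow> X = Y \<or> orth_adj X Y"
  by (auto simp: orth_adj_def orth_vertex_def)

lemma getd:
  assumes "(c::'a::comm_ring_1) \<in> zero_divisors" "c \<noteq> 0"
  shows "\<exists>d. d \<noteq> 0 \<and> d * c = 0 \<and> d \<in> zero_divisors - {0} \<and> orth_vertex (mat d :: 'a^'n^'n)"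
proof -
  obtain d where d: "d \<noteq> 0" "c * d = 0" using assms(1) by (auto simp: zero_divisors_def)
  have "(mat d :: 'a^'n^'n) ** mat c = (\<chi> i j. d * (mat c :: 'a^'n^'n)$i$j)" by (rule mat_lmul)
  also have "\<dots> = 0" using d by (auto simp: vec_eq_iff mat_def mult.commute)
  finally have m1: "(mat d :: 'a^'n^'n) ** mat c = 0" .
  have "(mat c :: 'a^'n^'n) ** mat d = (\<chi> i j. c * (mat d :: 'a^'n^'n)$i$j)" by (rule mat_lmul)
  also have "\<dots> = 0" using d by (auto simp: vec_eq_iff mat_def mult.commute)
  finally have "(mat c :: 'a^'n^'n) ** mat d = 0" .
  note m1 this
  then have "orth_vertex (mat d :: 'a^'n^'n)"
    using mat_nz[OF d(1)] mat_nz[OF assms(2)] by (auto simp: orth_vertex_def)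
  moreover have "d \<in> zero_divisors" using d assms by (auto simp: zero_divisors_def mult.commute)
  ultimately show ?thesis using d by (auto simp: mult.commute)
qed

lemma nbr:
  fixes A :: "'a::comm_ring_1^'n^'n"
  assumes "orth_vertex A" "c \<noteq> 0" "c * det A = 0" "d * c = 0" "d \<noteq> 0"
  shows "\<exists>Y. (A = Y \<or> orth_adj A Y) \<and> (Y = mat d \<or> orth_adj Y (mat d))
           \<and> (mat d = Y \<or> orth_adj (mat d) Y) \<and> (Y = A \<or> orth_adj Y A)"
proof -
  obtain X where X: "(\<chi> m q. c * X$m$q) \<noteq> 0" "A ** (\<chi> m q. c * X$m$q) = 0" "(\<chi> m q. c * X$m$q) ** A = 0"
    using key[OF assms(2,3)] by blast
  define Y where "Y = (\<chi> m q. c * X$m$q)"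
  have A0: "A \<noteq> 0" using assms(1) by (simp add: orth_vertex_def)
  have "mat d ** Y = 0" "Y ** mat d = 0"
    using assms(4) by (auto simp: Y_def mat_lmul mat_rmul vec_eq_iff mult_ac)
       (metis mult.assoc mult.commute mult_zero_left)+
  note X' = X[folded Y_def]
  have "A = Y \<or> orth_adj A Y" by (rule wadj_intro) (use X' A0 in auto)
  moreover have "Y = mat d \<or> orth_adj Y (mat d)"
    by (rule wadj_intro) (use X' \<open>mat d ** Y = 0\<close> \<open>Y ** mat d = 0\<close> mat_nz[OF assms(5)] in auto)
  moreover have "mat d = Y \<or> orth_adj (mat d) Y"
    by (rule wadj_intro) (use X' \<open>mat d ** Y = 0\<close> \<open>Y ** mat d = 0\<close> mat_nz[OF assms(5)] in auto)
  moreover have "Y = A \<or> orth_adj Y A" by (rule wadj_intro) (use X' A0 in auto)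
  ultimately show ?thesis by blast
qed



theorem corollary3:
  assumes "\<exists>z::'a::comm_ring_1. z \<in> zero_divisors \<and> z \<noteq> 0"
    and "CARD('n) > 1"
  shows "(\<forall>A::'a^'n^'n. orth_vertex A \<longrightarrow>
            (\<exists>b. b \<in> zero_divisors - {0} \<and> orth_vertex (mat b :: 'a^'n^'n)
                 \<and> graph_dist orth_adj A (mat b) \<le> 2))
       \<and> (\<forall>A1 A2::'a^'n^'n. orth_vertex A1 \<and> orth_vertex A2
            \<and> Ann (det A1) \<inter> Ann (det A2) \<noteq> {0}
            \<longrightarrow> graph_dist orth_adj A1 A2 \<le> 4)"
proof (intro conjI allI impI)
  have len3: "length [a, b, (c::'a^'n^'n)] - 1 = 2" for a b c by simp
  have len5: "length [a, b, c, e, (f::'a^'n^'n)] - 1 = 4" for a b c e f by simp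
  have e2: "enat 2 = 2" and e4: "enat 4 = 4" by (simp_all add: numeral_eq_enat)
  obtain z :: 'a where z: "z \<in> zero_divisors" "z \<noteq> 0" using assms(1) by blast
  {
    fix A :: "'a^'n^'n" assume A: "orth_vertex A"
    obtain c where c: "c \<noteq> 0" "c * det A = 0" "c \<in> zero_divisors"
    proof (cases "det A = 0")
      case True then show ?thesis using that z by auto
    next
      case False
      obtain B :: "'a^'n^'n" where B: "B \<noteq> 0" "A ** B = 0" using A by (auto simp: orth_vertex_def)
      then obtain i j where "B$i$j \<noteq> 0" by (auto simp: vec_eq_iff)
      moreover have "det A * B$i$j = 0" using det_annihilates[OF B(2)] .
      ultimately have "B$i$j \<in> zero_divisors" "B$i$j * det A = 0"
        using False unfolding zero_divisors_def by (auto simp: mult.commute)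
      then show ?thesis using \<open>B$i$j \<noteq> 0\<close> by (intro that) auto
    qed
    obtain d where d: "d \<noteq> 0" "d * c = 0" "d \<in> zero_divisors - {0}" "orth_vertex (mat d :: 'a^'n^'n)"
      using getd[OF c(3,1)] by blast
    obtain Y where Y: "(A = Y \<or> orth_adj A Y)" "(Y = mat d \<or> orth_adj Y (mat d))"
      using nbr[OF A c(1,2) d(2,1)] by blast
    have "graph_dist orth_adj A (mat d) \<le> enat (length [A, Y, mat d] - 1)"
      by (rule dist_le) (simp_all only: is_walk.simps Y list.sel last.simps list.distinct if_False if_True simp_thms)
    then show "\<exists>b. b \<in> zero_divisors - {0} \<and> orth_vertex (mat b :: 'a^'n^'n)
                 \<and> graph_dist orth_adj A (mat b) \<le> 2"
      using d by (intro exI[of _ d]) (simp only: len3 e2)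
  }
  {
    fix A1 A2 :: "'a^'n^'n"
    assume H: "orth_vertex A1 \<and> orth_vertex A2 \<and> Ann (det A1) \<inter> Ann (det A2) \<noteq> {0}"
    have "0 \<in> Ann (det A1) \<inter> Ann (det A2)" by (simp add: Ann_def)
    then obtain c0 where "c0 \<in> Ann (det A1) \<inter> Ann (det A2)" "c0 \<noteq> 0"
      using H by blast
    then have c0: "c0 \<noteq> 0" "det A1 * c0 = 0" "det A2 * c0 = 0" by (auto simp: Ann_def)
    obtain c where c: "c \<noteq> 0" "c * det A1 = 0" "c * det A2 = 0" "c \<in> zero_divisors"
    proof (cases "det A1 = 0 \<and> det A2 = 0")
      case True then show ?thesis using that z by auto
    next
      case False
      have "c0 \<in> zero_divisors"
      proof (cases "det A1 = 0")
        case True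
        then have "det A2 \<noteq> 0" using False by blast
        then show ?thesis unfolding zero_divisors_def using c0(3)
          by (intro CollectI exI[of _ "det A2"]) (simp add: mult.commute)
      next
        case f2: False
        then show ?thesis unfolding zero_divisors_def using c0(2)
          by (intro CollectI exI[of _ "det A1"]) (simp add: mult.commute)
      qed
      moreover have "c0 * det A1 = 0" "c0 * det A2 = 0" using c0 by (simp_all add: mult.commute)
      ultimately show ?thesis using c0(1) by (intro that)
    qed
    obtain d where d: "d \<noteq> 0" "d * c = 0" "d \<in> zero_divisors - {0}" "orth_vertex (mat d :: 'a^'n^'n)"
      using getd[OF c(4,1)] by blast
    have V1: "orth_vertex A1" and V2: "orth_vertex A2" using H by auto
    obtain Y1 where Y1: "(A1 = Y1 \<or> orth_adj A1 Y1)" "(Y1 = mat d \<or> orth_adj Y1 (mat d))"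
      using nbr[OF V1 c(1,2) d(2,1)] by blast
    obtain Y2 where Y2: "(mat d = Y2 \<or> orth_adj (mat d) Y2)" "(Y2 = A2 \<or> orth_adj Y2 A2)"
      using nbr[OF V2 c(1,3) d(2,1)] by blast
    have "graph_dist orth_adj A1 A2 \<le> enat (length [A1, Y1, mat d, Y2, A2] - 1)"
      by (rule dist_le) (simp_all only: is_walk.simps Y1 Y2 list.sel last.simps list.distinct if_False if_True simp_thms)
    then show "graph_dist orth_adj A1 A2 \<le> 4" by (simp only: len5 e4)
  }
qed


end
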